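(* Let $A$ and $B$ be rings, $f: A\to B$ a ring homomorphism and $J$ a proper ideal of $B$ such that $J$ is semicommutative. If $A$ is a weak Armendariz ring, then $A\bowtie^{f}J$ is a weak Armendariz ring.
   Context: All rings are associative with identity (not necessarily commutative), ring homomorphisms are unital, and ideals are two-sided. $\mathrm{nil}(R)$ denotes the set of nilpotent elements of a ring $R$. For a ring homomorphism $f:A\to B$ and an ideal $J$ of $B$, the amalgamation is the subring $A\bowtie^{f}J=\{(a,f(a)+j)\mid a\in A,\ j\in J\}$ of $A\times B$. A ring $R$ (possibly without identity, e.g. an ideal regarded as a ring) is semicommutative if for all $a,b\in R$, $ab=0$ implies $aRb=0$. A ring $R$ is weak Armendariz if whenever $p(x)=\sum_{i=0}^n a_ix^i$ and $q(x)=\sum_{j=0}^m b_jx^j$ in $R[x]$ satisfy $p(x)q(x)=0$, then $a_ib_j\in\mathrm{nil}(R)$ for all $i,j$. *)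

theory Defs
  imports Main "HOL-Library.Product_Plus"
begin

instantiation prod :: (times, times) times
begin
definition times_prod_def: "x * y = (fst x * fst y, snd x * snd y)"
instance ..
end

instantiation prod :: (one, one) one
begin
definition one_prod_def: "1 = (1, 1)"
instance ..
end

instance prod :: (ring_1, ring_1) ring_1
  by standard (auto simp: times_prod_def one_prod_def zero_prod_def plus_prod_def
      algebra_simps prod_eq_iff)

definition ring_hom :: "('a::ring_1 \<Rightarrow> 'b::ring_1) \<Rightarrow> bool" where
  "ring_hom f \<longleftrightarrow> f 1 = 1 \<and> (\<forall>x y. f (x + y) = f x + f y) \<and> (\<forall>x y. f (x * y) = f x * f y)"

definition two_sided_ideal :: "'b::ring_1 set \<Rightarrow> bool" where
  "two_sided_ideal J \<longleftrightarrow> 0 \<in> J \<and> (\<forall>x\<in>J. \<forall>y\<in>J. x + y \<in> J) \<and> (\<forall>x\<in>J. - x \<in> J)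
     \<and> (\<forall>r x. x \<in> J \<longrightarrow> r * x \<in> J \<and> x * r \<in> J)"

text \<open>An ideal J regarded as a ring without identity is semicommutative.\<close>
definition semicommutative_on :: "'b::ring_1 set \<Rightarrow> bool" where
  "semicommutative_on J \<longleftrightarrow>
     (\<forall>a\<in>J. \<forall>b\<in>J. a * b = 0 \<longrightarrow> (\<forall>r\<in>J. a * r * b = 0))"

definition amalg :: "('a::ring_1 \<Rightarrow> 'b::ring_1) \<Rightarrow> 'b set \<Rightarrow> ('a \<times> 'b) set" where
  "amalg f J = {(a, f a + j) | a j. j \<in> J}"

definition nil_on :: "'r::ring_1 set \<Rightarrow> 'r set" where
  "nil_on S = {x \<in> S. \<exists>k. x ^ k = 0}"

text \<open>Polynomials over S
  are represented by coefficient sequences p with p i \<in> S for all i and p i = 0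
  for i > deg; the product pq has k-th coefficient \<Sum>i\<le>k. p i * q (k - i).\<close>
definition weak_armendariz_on :: "'r::ring_1 set \<Rightarrow> bool" where
  "weak_armendariz_on S \<longleftrightarrow>
     (\<forall>(p::nat \<Rightarrow> 'r) q n m.
        (\<forall>i. p i \<in> S) \<and> (\<forall>i. q i \<in> S) \<and> (\<forall>i>n. p i = 0) \<and> (\<forall>j>m. q j = 0)
        \<and> (\<forall>k. (\<Sum>i\<le>k. p i * q (k - i)) = 0)
        \<longrightarrow> (\<forall>i j. p i * q j \<in> nil_on S))"

end

theory Submission
  imports Defs
begin

definition Cp :: "'b::ring_1 set \<Rightarrow> 'b \<Rightarrow> nat \<Rightarrow> 'b \<Rightarrow> bool" where
  "Cp J a m x \<longleftrightarrow> x \<in> insert 1 J \<and>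
     (\<forall>w\<in>insert 1 J. \<forall>y\<in>insert 1 J. w * a ^ m * y = 0 \<longrightarrow> w * x * y = 0)"

definition nilJ :: "'b::ring_1 set \<Rightarrow> 'b \<Rightarrow> bool" where
  "nilJ J x \<longleftrightarrow> x \<in> J \<and> (\<exists>n. x ^ n = 0)"

context
  fixes J :: "'b::ring_1 set"
  assumes idl: "two_sided_ideal J" and sc: "semicommutative_on J"
begin

lemma J0: "0 \<in> J" using idl by (simp add: two_sided_ideal_def)
lemma Jadd: "x \<in> J \<Longrightarrow> y \<in> J \<Longrightarrow> x + y \<in> J" using idl by (simp add: two_sided_ideal_def)
lemma Jneg: "x \<in> J \<Longrightarrow> - x \<in> J" using idl by (simp add: two_sided_ideal_def)
lemma Jl: "x \<in> J \<Longrightarrow> r * x \<in> J" using idl by (simp add: two_sided_ideal_def)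
lemma Jr: "x \<in> J \<Longrightarrow> x * r \<in> J" using idl by (simp add: two_sided_ideal_def)

lemma J1mult: "x \<in> insert 1 J \<Longrightarrow> y \<in> insert 1 J \<Longrightarrow> x * y \<in> insert 1 J"
  using Jl Jr by auto

lemma J1multJ: "x \<in> insert 1 J \<Longrightarrow> y \<in> J \<Longrightarrow> x * y \<in> J"
  using Jl by auto

lemma J1multJ': "x \<in> J \<Longrightarrow> y \<in> insert 1 J \<Longrightarrow> x * y \<in> J"
  using Jr by auto

lemma J1pow: "a \<in> J \<Longrightarrow> a ^ m \<in> insert 1 J"
  by (induction m) (simp, metis J1mult insertI2 power_Suc)

lemma ins: assumes "w \<in> insert 1 J" "y \<in> insert 1 J" "s \<in> J" "w * y = 0"
  shows "w * s * y = 0"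
proof (cases "w = 1")
  case True then show ?thesis using assms by simp
next
  case False
  then have w: "w \<in> J" using assms by auto
  show ?thesis
  proof (cases "y = 1")
    case True then show ?thesis using assms by simp
  next
    case False
    then have "y \<in> J" using assms by auto
    then show ?thesis using sc w assms unfolding semicommutative_on_def by blast
  qed
qed

lemma C0: "x \<in> insert 1 J \<Longrightarrow> Cp J a 0 x"
  unfolding Cp_def
proof (intro conjI ballI impI)
  fix w y assume x: "x \<in> insert 1 J" and w: "w \<in> insert 1 J" and y: "y \<in> insert 1 J"
    and e: "w * a ^ 0 * y = 0"
  show "w * x * y = 0"
  proof (cases "x = 1")
    case True then show ?thesis using e by simp
  next
    case False then have "x \<in> J" using x by auto
    then show ?thesis using ins[OF w y] e by simp
  qed
qed

lemma C1: "a \<in> J \<Longrightarrow> Cp J a 1 a"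
  unfolding Cp_def by auto

lemma Cmult: assumes a: "a \<in> J" and c1: "Cp J a m1 x1" and c2: "Cp J a m2 x2"
  shows "Cp J a (m1 + m2) (x1 * x2)"
  unfolding Cp_def
proof (intro conjI ballI impI)
  show "x1 * x2 \<in> insert 1 J" using c1 c2 J1mult unfolding Cp_def by blast
  fix w y assume w: "w \<in> insert 1 J" and y: "y \<in> insert 1 J" and e: "w * a ^ (m1 + m2) * y = 0"
  have "w * a ^ m1 * (a ^ m2 * y) = 0" using e by (simp add: power_add mult.assoc)
  moreover have "a ^ m2 * y \<in> insert 1 J" using J1mult J1pow a y by blast
  ultimately have "w * x1 * (a ^ m2 * y) = 0" using c1 w unfolding Cp_def by blast
  then have "(w * x1) * a ^ m2 * y = 0" by (simp add: mult.assoc)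
  moreover have "w * x1 \<in> insert 1 J" using J1mult w c1 unfolding Cp_def by blast
  ultimately have "(w * x1) * x2 * y = 0" using c2 y unfolding Cp_def by blast
  then show "w * (x1 * x2) * y = 0" by (simp add: mult.assoc)
qed

lemma Cadd: assumes "Cp J a m x1" "Cp J a m x2" "x1 \<in> J" "x2 \<in> J"
  shows "Cp J a m (x1 + x2)"
  using assms Jadd unfolding Cp_def by (auto simp: distrib_left distrib_right)

lemma Czero: "Cp J a m 0"
  using J0 unfolding Cp_def by auto

lemma Cpow: assumes "a \<in> J" "Cp J a m x" shows "Cp J a (m * k) (x ^ k)"
proof (induction k)
  case 0 then show ?case using C0 by simp
next
  case (Suc k)
  have "Cp J a (m * k + m) (x ^ k * x)" using Cmult[OF assms(1) Suc assms(2)] .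
  then show ?case by (metis power_Suc2 add.commute mult_Suc_right)
qed

lemma Ckill: assumes "Cp J a n x" "a ^ n = 0" shows "x = 0"
proof -
  have "1 * a ^ n * 1 = 0" using assms by simp
  then have "1 * x * 1 = 0" using assms(1) unfolding Cp_def by blast
  then show ?thesis by simp
qed

lemma Jpow: "x \<in> J \<Longrightarrow> x ^ Suc k \<in> J"
  using J1multJ'[OF _ J1pow[of x k]] by simp

lemma Ssum: assumes a: "a \<in> J" and b: "b \<in> J"
  shows "\<forall>p q. p + q = k + 1 \<longrightarrow> (\<exists>y z. (a + b) ^ k = y + z \<and> Cp J a p y \<and> Cp J b q z)"
proof (induction k)
  case 0
  show ?case
  proof (intro allI impI)
    fix p q :: nat assume "p + q = 0 + 1"
    then consider "p = 0" "q = 1" | "p = 1" "q = 0" by linarith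
    then show "\<exists>y z. (a + b) ^ 0 = y + z \<and> Cp J a p y \<and> Cp J b q z"
    proof cases
      case 1 then show ?thesis using C0[of 1 a] Czero[of b 1] by (intro exI[of _ 1] exI[of _ 0]) simp
    next
      case 2 then show ?thesis using C0[of 1 b] Czero[of a 1] by (intro exI[of _ 0] exI[of _ 1]) simp
    qed
  qed
next
  case (Suc k)
  show ?case
  proof (intro allI impI)
    fix p q :: nat assume pq: "p + q = Suc k + 1"
    have abJ: "(a + b) ^ Suc k \<in> J" using Jpow Jadd a b by blast
    show "\<exists>y z. (a + b) ^ Suc k = y + z \<and> Cp J a p y \<and> Cp J b q z"
    proof (cases "p = 0")
      case True then show ?thesis using C0[of "(a+b)^Suc k" a] Czero[of b q] abJ
        by (intro exI[of _ "(a+b)^Suc k"] exI[of _ 0]) simp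
    next
      case p0: False
      show ?thesis
      proof (cases "q = 0")
        case True then show ?thesis using C0[of "(a+b)^Suc k" b] Czero[of a p] abJ
          by (intro exI[of _ 0] exI[of _ "(a+b)^Suc k"]) simp
      next
        case q0: False
        obtain y1 z1 where h1: "(a + b) ^ k = y1 + z1" "Cp J a (p - 1) y1" "Cp J b q z1"
          using Suc.IH pq p0 by (metis Suc_eq_plus1 add_Suc diff_Suc_1 not0_implies_Suc)
        obtain y2 z2 where h2: "(a + b) ^ k = y2 + z2" "Cp J a p y2" "Cp J b (q - 1) z2"
          using Suc.IH pq q0 by (metis Suc_eq_plus1 add_Suc_right diff_Suc_1 not0_implies_Suc)
        have e: "(a + b) ^ Suc k = (y1 * a + y2 * b) + (z1 * a + z2 * b)"
        proof -
          have "(a + b) ^ Suc k = (a + b) ^ k * a + (a + b) ^ k * b"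
            by (simp only: power_Suc2 distrib_left)
          also have "\<dots> = (y1 + z1) * a + (y2 + z2) * b" using h1 h2 by simp
          finally show ?thesis by (simp add: algebra_simps)
        qed
        have c1: "Cp J a p (y1 * a)" using Cmult[OF a h1(2) C1[OF a]] p0 by simp
        have c2: "Cp J a p (y2 * b)" using Cmult[OF a h2(2) C0[of b a]] b by simp
        have c3: "Cp J b q (z1 * a)" using Cmult[OF b h1(3) C0[of a b]] a by simp
        have c4: "Cp J b q (z2 * b)" using Cmult[OF b h2(3) C1[OF b]] q0 by simp
        have m: "y1 * a \<in> J" "y2 * b \<in> J" "z1 * a \<in> J" "z2 * b \<in> J"
          using h1 h2 a b J1multJ unfolding Cp_def by blast+
        show ?thesis using e Cadd[OF c1 c2 m(1,2)] Cadd[OF c3 c4 m(3,4)] by blast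
      qed
    qed
  qed
qed

lemma N_add: assumes "nilJ J a" "nilJ J b" shows "nilJ J (a + b)"
proof -
  obtain m n where a: "a \<in> J" "a ^ m = 0" and b: "b \<in> J" "b ^ n = 0"
    using assms unfolding nilJ_def by blast
  have "b ^ Suc n = 0" using b by simp
  obtain y z where "(a + b) ^ (m + n) = y + z" "Cp J a m y" "Cp J b (Suc n) z"
    using Ssum[OF a(1) b(1), of "m + n"] by (metis add_Suc_right Suc_eq_plus1)
  then have "(a + b) ^ (m + n) = 0" using Ckill a b by (metis add_0 \<open>b ^ Suc n = 0\<close>)
  then show ?thesis using a b Jadd unfolding nilJ_def by blast
qed

lemma N_neg: assumes "nilJ J a" shows "nilJ J (- a)"
  using assms Jneg unfolding nilJ_def by (metis mult_zero_right power_minus)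

lemma N_right: assumes "nilJ J a" "r \<in> J" shows "nilJ J (a * r)"
proof -
  obtain n where a: "a \<in> J" "a ^ n = 0" using assms unfolding nilJ_def by blast
  have "Cp J a (1 + 0) (a * r)" using Cmult[OF a(1) C1[OF a(1)] C0[of r a]] assms by simp
  then have "Cp J a 1 (a * r)" by simp
  from Cpow[OF a(1) this, of n] have "Cp J a n ((a * r) ^ n)" by simp
  then have "(a * r) ^ n = 0" using Ckill a by simp
  then show ?thesis using a Jr unfolding nilJ_def by blast
qed

lemma N_left: assumes "nilJ J a" "r \<in> J" shows "nilJ J (r * a)"
proof -
  obtain n where a: "a \<in> J" "a ^ n = 0" using assms unfolding nilJ_def by blast
  have "Cp J a (0 + 1) (r * a)" using Cmult[OF a(1) C0[of r a] C1[OF a(1)]] assms by simp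
  then have "Cp J a 1 (r * a)" by simp
  from Cpow[OF a(1) this, of n] have "Cp J a n ((r * a) ^ n)" by simp
  then have "(r * a) ^ n = 0" using Ckill a by simp
  then show ?thesis using a Jl unfolding nilJ_def by blast
qed

lemma pow_swap: "(y::'b) * (x * y) ^ n = (y * x) ^ n * y"
  by (induction n) (simp_all add: power_Suc2 mult.assoc[symmetric], simp add: mult.assoc)

lemma N_swap: assumes "nilJ J (x * y)" "x \<in> J" "y \<in> J" shows "nilJ J (y * x)"
proof -
  obtain n where "(x * y) ^ n = 0" using assms unfolding nilJ_def by blast
  then have "(y * x) ^ Suc n = 0"
    by (metis pow_swap mult_zero_left mult_zero_right power_Suc2 mult.assoc)
  then show ?thesis using assms Jl unfolding nilJ_def by blast
qed

lemma N_sq: assumes "nilJ J (x * x)" "x \<in> J" shows "nilJ J x"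
proof -
  obtain n where "(x * x) ^ n = 0" using assms unfolding nilJ_def by blast
  then have "x ^ (2 * n) = 0" by (simp add: power_mult power2_eq_square)
  then show ?thesis using assms unfolding nilJ_def by blast
qed

lemma N_zero: "nilJ J 0"
  using J0 unfolding nilJ_def by (metis power_one_right)

lemma N_sum: "finite S \<Longrightarrow> (\<forall>l\<in>S. nilJ J (T l)) \<Longrightarrow> nilJ J (sum T S)"
  by (induction S rule: finite_induct) (auto intro: N_add N_zero)

lemma J_arm: fixes k :: nat and U V :: "nat \<Rightarrow> 'b" assumes U: "\<forall>l. U l \<in> J" and V: "\<forall>l. V l \<in> J"
  and c: "\<forall>k. (\<Sum>l\<le>k. U l * V (k - l)) = 0"
  shows "\<forall>i. i \<le> k \<longrightarrow> nilJ J (U i * V (k - i))"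
proof (induction k rule: less_induct)
  case (less k)
  note OIH = less.IH
  show ?case
  proof (intro allI)
    fix i
    show "i \<le> k \<longrightarrow> nilJ J (U i * V (k - i))"
    proof (induction i rule: less_induct)
      case (less i)
      show ?case
      proof
        assume ik: "i \<le> k"
        define T where "T l = U l * V (k - l) * U i" for l
        have sumT: "sum T {..k} = 0"
          using c unfolding T_def by (simp add: sum_distrib_right[symmetric])
        have others: "\<forall>l\<in>{..k} - {i}. nilJ J (T l)"
        proof
          fix l assume l: "l \<in> {..k} - {i}"
          show "nilJ J (T l)"
          proof (cases "l < i")
            case True
            then have "nilJ J (U l * V (k - l))" using less.IH l by auto
            then show ?thesis unfolding T_def using N_right U by blast
          next
            case False
            then have li: "i < l" "l \<le> k" using l by auto
            have lt: "i + (k - l) < k" using li by simp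
            from OIH[OF lt] have "nilJ J (U i * V ((i + (k - l)) - i))" by (meson le_add1)
            then have "nilJ J (U i * V (k - l))" by simp
            then have "nilJ J (V (k - l) * U i)" using N_swap U V by blast
            then have "nilJ J (U l * (V (k - l) * U i))" using N_left U by blast
            then show ?thesis unfolding T_def by (simp add: mult.assoc)
          qed
        qed
        have "sum T {..k} = T i + sum T ({..k} - {i})"
          using ik by (simp add: sum.remove)
        then have "T i = - sum T ({..k} - {i})" using sumT by (simp add: eq_neg_iff_add_eq_0)
        then have "nilJ J (T i)" using N_neg N_sum[OF _ others] by simp
        then have "nilJ J (U i * V (k - i) * U i * V (k - i))"
          unfolding T_def using N_right V by blast
        then have "nilJ J ((U i * V (k - i)) * (U i * V (k - i)))" by (simp add: mult.assoc)
        then show "nilJ J (U i * V (k - i))" using N_sq U Jr by blast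
      qed
    qed
  qed
qed

end


lemma fst_mult: "fst (x * y) = fst x * fst y" by (simp add: times_prod_def)
lemma snd_mult: "snd (x * y) = snd x * snd y" by (simp add: times_prod_def)
lemma fst_pow: "fst (x ^ n) = fst x ^ n"
  by (induction n) (simp_all add: one_prod_def fst_mult)
lemma snd_pow: "snd (x ^ n) = snd x ^ n"
  by (induction n) (simp_all add: one_prod_def snd_mult)

lemma hom0: "ring_hom f \<Longrightarrow> f 0 = 0"
  unfolding ring_hom_def by (metis add_cancel_right_right add_0)

lemma amalg_iff: "z \<in> amalg f J \<longleftrightarrow> snd z - f (fst z) \<in> J"
proof
  assume "z \<in> amalg f J"
  then obtain a j where "z = (a, f a + j)" "j \<in> J" unfolding amalg_def by blast
  then show "snd z - f (fst z) \<in> J" by simp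
next
  assume "snd z - f (fst z) \<in> J"
  then show "z \<in> amalg f J" unfolding amalg_def
    by (intro CollectI exI[of _ "fst z"] exI[of _ "snd z - f (fst z)"]) (simp add: prod_eq_iff)
qed

lemma amalg_mult:
  assumes h: "ring_hom f" and idl: "two_sided_ideal J"
    and z: "z \<in> amalg f J" and w: "w \<in> amalg f J"
  shows "z * w \<in> amalg f J"
proof -
  define j k where "j = snd z - f (fst z)" and "k = snd w - f (fst w)"
  have jk: "j \<in> J" "k \<in> J" using z w amalg_iff unfolding j_def k_def by blast+
  have "snd (z * w) - f (fst (z * w)) = f (fst z) * k + j * f (fst w) + j * k"
  proof -
    have "snd (z * w) - f (fst (z * w)) = (f (fst z) + j) * (f (fst w) + k) - f (fst z) * f (fst w)"
      using h unfolding j_def k_def ring_hom_def by (simp add: fst_mult snd_mult)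
    then show ?thesis by (simp add: algebra_simps)
  qed
  moreover have "f (fst z) * k + j * f (fst w) + j * k \<in> J"
    using jk idl unfolding two_sided_ideal_def by blast
  ultimately show ?thesis using amalg_iff by metis
qed

lemma amalg_pow:
  assumes h: "ring_hom f" and idl: "two_sided_ideal J" and z: "z \<in> amalg f J"
  shows "z ^ n \<in> amalg f J"
proof (induction n)
  case 0
  have "snd (1::'a \<times> 'b) - f (fst (1::'a \<times> 'b)) = 0" using h by (simp add: one_prod_def ring_hom_def)
  then show ?case using amalg_iff idl unfolding two_sided_ideal_def by (metis power_0)
next
  case (Suc n) then show ?case using amalg_mult[OF h idl z] by (simp add: power_Suc)
qed

theorem theorem4p1:
  fixes f :: "'a::ring_1 \<Rightarrow> 'b::ring_1" and J :: "'b set"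
  assumes "ring_hom f"
    and "two_sided_ideal J" and "J \<noteq> UNIV"
    and "semicommutative_on J"
    and "weak_armendariz_on (UNIV :: 'a set)"
  shows "weak_armendariz_on (amalg f J)"
  unfolding weak_armendariz_on_def
proof (intro allI impI)
  fix p q :: "nat \<Rightarrow> 'a \<times> 'b" and n m i j
  assume H: "(\<forall>i. p i \<in> amalg f J) \<and> (\<forall>i. q i \<in> amalg f J) \<and> (\<forall>i>n. p i = 0) \<and> (\<forall>j>m. q j = 0) \<and>
       (\<forall>k. (\<Sum>i\<le>k. p i * q (k - i)) = 0)"
  have h: "ring_hom f" and idl: "two_sided_ideal J" and sc: "semicommutative_on J"
    using assms by auto
  have WA: "\<And>(p'::nat \<Rightarrow> 'a) q' n m. (\<forall>i. p' i \<in> UNIV) \<and> (\<forall>i. q' i \<in> UNIV) \<and> (\<forall>i>n. p' i = 0) \<and> (\<forall>j>m. q' j = 0)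
        \<and> (\<forall>k. (\<Sum>i\<le>k. p' i * q' (k - i)) = 0) \<Longrightarrow> p' i * q' j \<in> nil_on UNIV"
    using assms(5) unfolding weak_armendariz_on_def by blast
  have "(\<lambda>i. fst (p i)) i * (\<lambda>i. fst (q i)) j \<in> nil_on UNIV"
  proof (rule WA[of _ _ n m], intro conjI allI impI)
    fix i assume "n < i" then show "fst (p i) = 0" using H by simp
  next
    fix i assume "m < i" then show "fst (q i) = 0" using H by simp
  next
    fix k
    have "(\<Sum>i\<le>k. fst (p i) * fst (q (k - i))) = fst (\<Sum>i\<le>k. p i * q (k - i))"
      by (simp add: fst_sum fst_mult)
    then show "(\<Sum>i\<le>k. fst (p i) * fst (q (k - i))) = 0" using H by simp
  qed auto
  then obtain n' where n': "(fst (p i) * fst (q j)) ^ n' = 0" unfolding nil_on_def by auto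
  define z where "z = p i * q j"
  have zA: "z \<in> amalg f J" using amalg_mult[OF h idl] H unfolding z_def by blast
  have fz: "fst z ^ n' = 0" using n' unfolding z_def by (simp add: fst_mult)
  define c where "c = snd z"
  define d where "d = c ^ n'"
  have "z ^ n' \<in> amalg f J" using amalg_pow[OF h idl zA] .
  then have "snd (z ^ n') - f (fst (z ^ n')) \<in> J" using amalg_iff by blast
  then have dJ: "d \<in> J" using fz hom0[OF h] unfolding d_def c_def by (simp add: fst_pow snd_pow)
  define U where "U l = d * snd (p l)" for l
  define V where "V l = snd (q l) * d" for l
  have UJ: "\<forall>l. U l \<in> J" unfolding U_def using Jr[OF idl sc dJ] by blast
  have VJ: "\<forall>l. V l \<in> J" unfolding V_def using Jl[OF idl sc dJ] by blast
  have UV: "\<forall>k. (\<Sum>l\<le>k. U l * V (k - l)) = 0"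
  proof
    fix k
    have "(\<Sum>l\<le>k. U l * V (k - l)) = d * (\<Sum>l\<le>k. snd (p l) * snd (q (k - l))) * d"
      unfolding U_def V_def by (simp add: sum_distrib_left sum_distrib_right mult.assoc)
    also have "(\<Sum>l\<le>k. snd (p l) * snd (q (k - l))) = snd (\<Sum>l\<le>k. p l * q (k - l))"
      by (simp add: snd_sum snd_mult)
    finally show "(\<Sum>l\<le>k. U l * V (k - l)) = 0" using H by simp
  qed
  have "nilJ J (U i * V ((i + j) - i))" using J_arm[OF idl sc UJ VJ UV, of "i + j"] by (metis le_add1)
  then obtain e where e: "(U i * V j) ^ e = 0" unfolding nilJ_def by auto
  have "U i * V j = d * c * d"
    unfolding U_def V_def c_def z_def by (simp add: snd_mult mult.assoc)
  also have "\<dots> = c ^ (Suc n' + n')"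
    unfolding d_def by (simp only: power_Suc2[symmetric] power_add[symmetric] mult.assoc[symmetric])
  also have "Suc n' + n' = 2 * n' + 1" by simp
  finally have "U i * V j = c ^ (2 * n' + 1)" .
  then have ce: "c ^ ((2 * n' + 1) * e) = 0" using e by (simp only: power_mult)
  define N where "N = (2 * n' + 1) * e + n'"
  have "fst (z ^ N) = 0" unfolding N_def power_add fst_mult fst_pow using fz by simp
  moreover have "snd (z ^ N) = 0" unfolding N_def power_add[of z] snd_mult snd_pow using ce unfolding c_def by simp
  ultimately have "z ^ N = 0" by (simp add: prod_eq_iff)
  then show "p i * q j \<in> nil_on (amalg f J)" using zA unfolding nil_on_def z_def by blast
qed

end
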